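(* Let $k_1,k_2$ be positive integers and let $D$ be a digraph containing no subdivision of $C(k_1,k_2)$ as a subdigraph. Then $\chi(D)\le 3\,\alpha(D)\,k$, where $k=\max\{k_1,k_2\}$ and $\alpha(D)$ is the maximum size of a stable set of (the underlying graph of) $D$.
   Context: Digraphs are orientations of finite simple graphs (no loops, no multiple arcs, no pair of opposite arcs). The chromatic number $\chi(D)$ of a digraph is the chromatic number of its underlying undirected graph. For positive integers $k_1,k_2$, $C(k_1,k_2)$ is the oriented cycle formed by two internally disjoint directed $xy$-paths of lengths $k_1$ and $k_2$. A subdivision of a digraph $H$ is obtained by replacing each arc $(u,v)$ by a directed $uv$-path of length at least $1$, these paths being internally disjoint. *)

theory Defs
  imports Main
begin

definition oriented_graph :: "'a set \<Rightarrow> ('a \<times> 'a) set \<Rightarrow> bool" where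
  "oriented_graph V A \<longleftrightarrow> finite V \<and> A \<subseteq> V \<times> V \<and>
     (\<forall>u. (u, u) \<notin> A) \<and> (\<forall>u v. (u, v) \<in> A \<longrightarrow> (v, u) \<notin> A)"

definition adj :: "('a \<times> 'a) set \<Rightarrow> 'a \<Rightarrow> 'a \<Rightarrow> bool" where
  "adj A u v \<longleftrightarrow> (u, v) \<in> A \<or> (v, u) \<in> A"

definition proper_colouring :: "'a set \<Rightarrow> ('a \<times> 'a) set \<Rightarrow> nat \<Rightarrow> ('a \<Rightarrow> nat) \<Rightarrow> bool" where
  "proper_colouring V A k c \<longleftrightarrow> (\<forall>v\<in>V. c v < k) \<and> (\<forall>u\<in>V. \<forall>v\<in>V. adj A u v \<longrightarrow> c u \<noteq> c v)"

definition chromatic_number :: "'a set \<Rightarrow> ('a \<times> 'a) set \<Rightarrow> nat" where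
  "chromatic_number V A = (LEAST k. \<exists>c. proper_colouring V A k c)"

definition stable_set :: "'a set \<Rightarrow> ('a \<times> 'a) set \<Rightarrow> 'a set \<Rightarrow> bool" where
  "stable_set V A S \<longleftrightarrow> S \<subseteq> V \<and> (\<forall>u\<in>S. \<forall>v\<in>S. \<not> adj A u v)"

definition stability_number :: "'a set \<Rightarrow> ('a \<times> 'a) set \<Rightarrow> nat" where
  "stability_number V A = Max (card ` {S. stable_set V A S})"

(* p is a directed path in (V,A) from x to y: distinct vertices, consecutive
   vertices joined by arcs; its length is  length p - 1 *)
definition dipath :: "'a set \<Rightarrow> ('a \<times> 'a) set \<Rightarrow> 'a list \<Rightarrow> 'a \<Rightarrow> 'a \<Rightarrow> bool" where
  "dipath V A p x y \<longleftrightarrow> p \<noteq> [] \<and> distinct p \<and> set p \<subseteq> V \<and> hd p = x \<and> last p = y \<and>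
     (\<forall>i. Suc i < length p \<longrightarrow> (p ! i, p ! Suc i) \<in> A)"

(* (V,A) contains a subdivision of C(k1,k2) as a subdigraph: a subdivision of
   C(k1,k2) is exactly the union of two internally disjoint directed xy-paths
   of lengths l1 \<ge> k1 and l2 \<ge> k2 (x \<noteq> y), using distinct arcs, i.e. not both
   equal to the single arc xy. *)
definition contains_subdiv_C :: "'a set \<Rightarrow> ('a \<times> 'a) set \<Rightarrow> nat \<Rightarrow> nat \<Rightarrow> bool" where
  "contains_subdiv_C V A k1 k2 \<longleftrightarrow>
     (\<exists>x y p1 p2. x \<noteq> y \<and> dipath V A p1 x y \<and> dipath V A p2 x y \<and>
        set p1 \<inter> set p2 = {x, y} \<and>
        length p1 - 1 \<ge> k1 \<and> length p2 - 1 \<ge> k2 \<and>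
        (length p1 > 2 \<or> length p2 > 2))"

end

theory Submission
  imports Defs
begin

lemma nc_low_degree:
  fixes S :: "nat set" and E :: "nat \<Rightarrow> nat \<Rightarrow> bool"
  assumes fin: "finite S" and ne: "S \<noteq> {}"
    and Esym: "\<And>i j. E i j \<Longrightarrow> E j i"
    and nc: "\<And>a b c d. a \<in> S \<Longrightarrow> b \<in> S \<Longrightarrow> c \<in> S \<Longrightarrow> d \<in> S \<Longrightarrow>
              a < b \<Longrightarrow> b < c \<Longrightarrow> c < d \<Longrightarrow> E a c \<Longrightarrow> E b d \<Longrightarrow> False"
  shows "\<exists>u\<in>S. card {w\<in>S. w \<noteq> u \<and> E u w} \<le> 2"
proof -
  define long where "long a b \<longleftrightarrow> a \<in> S \<and> b \<in> S \<and> a < b \<and> E a b \<and> (\<exists>w\<in>S. a < w \<and> w < b)" for a b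
  show ?thesis
  proof (cases "\<exists>a b. long a b")
    case False
    define u where "u = Min S"
    have uS: "u \<in> S" using fin ne u_def by simp
    have umin: "\<And>w. w \<in> S \<Longrightarrow> u \<le> w" using fin u_def by simp
    let ?N = "{w\<in>S. w \<noteq> u \<and> E u w}"
    have "card ?N \<le> Suc 0"
    proof (subst card_le_Suc0_iff_eq)
      show "finite ?N" using fin by simp
      show "\<forall>x\<in>?N. \<forall>y\<in>?N. x = y"
      proof (intro ballI)
        fix x y assume x: "x \<in> ?N" and y: "y \<in> ?N"
        have ux: "u < x" using x umin[of x] by auto
        have uy: "u < y" using y umin[of y] by auto
        show "x = y"
        proof (rule ccontr)
          assume "x \<noteq> y"
          then consider "x < y" | "y < x" by linarith
          then show False
          proof cases
            case 1 then have "long u y" using x y uy ux uS unfolding long_def by auto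
            then show False using False by blast
          next
            case 2 then have "long u x" using x y uy ux uS unfolding long_def by auto
            then show False using False by blast
          qed
        qed
      qed
    qed
    then show ?thesis using uS by (intro bexI[of _ u]) auto
  next
    case True
    define m where "m = (LEAST d. \<exists>a b. long a b \<and> b - a = d)"
    have "\<exists>a b. long a b \<and> b - a = m"
      unfolding m_def using True LeastI_ex[of "\<lambda>d. \<exists>a b. long a b \<and> b - a = d"] by blast
    then obtain p q where pq: "long p q" "q - p = m" by blast
    have mmin: "q - p \<le> b - a" if "long a b" for a b
      unfolding pq(2) m_def by (rule Least_le) (use that in blast)
    define I where "I = {w\<in>S. p < w \<and> w < q}"
    have Ine: "I \<noteq> {}" using pq(1) unfolding long_def I_def by auto
    have Ifin: "finite I" using fin I_def by simp
    define u where "u = Min I"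
    have uI: "u \<in> I" using Ine Ifin u_def by simp
    have umin: "\<And>w. w \<in> I \<Longrightarrow> u \<le> w" using Ifin u_def by simp
    have pS: "p \<in> S" and qS: "q \<in> S" and Epq: "E p q" and plq: "p < q" using pq(1) long_def by auto
    have uS: "u \<in> S" and pu: "p < u" and uq: "u < q" using uI I_def by auto
    define U where "U = {w\<in>S. u < w \<and> E u w}"
    have N: "{w\<in>S. w \<noteq> u \<and> E u w} \<subseteq> insert p U"
    proof
      fix w assume w: "w \<in> {w\<in>S. w \<noteq> u \<and> E u w}"
      show "w \<in> insert p U"
      proof (cases "w < u")
        case True
        have "\<not> w < p" using nc[of w p u q] Esym[of u w] w pS uS qS pu uq Epq True by auto
        moreover have "\<not> (p < w)" using umin[of w] True w uq unfolding I_def by auto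
        ultimately show ?thesis by auto
      next
        case False then show ?thesis using w unfolding U_def by auto
      qed
    qed
    have "card U \<le> Suc 0"
    proof (subst card_le_Suc0_iff_eq)
      show "finite U" using fin U_def by simp
      have wq: "w \<le> q" if "w \<in> U" for w
      proof (rule ccontr)
        assume "\<not> w \<le> q"
        then show False using nc[of p u q w] that pS uS qS pu uq Epq unfolding U_def by auto
      qed
      show "\<forall>x\<in>U. \<forall>y\<in>U. x = y"
      proof (intro ballI)
        fix x y assume x: "x \<in> U" and y: "y \<in> U"
        show "x = y"
        proof (rule ccontr)
          assume "x \<noteq> y"
          then consider "x < y" | "y < x" by linarith
          then show False
          proof cases
            case 1 then have "long u y" using x y uS unfolding long_def U_def by auto
            from mmin[OF this] wq[OF y] pu show False using uq by linarith
          next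
            case 2 then have "long u x" using x y uS unfolding long_def U_def by auto
            from mmin[OF this] wq[OF x] pu show False using uq by linarith
          qed
        qed
      qed
    qed
    moreover have "finite U" using fin U_def by simp
    ultimately have "card (insert p U) \<le> 2"
      by (simp add: card_insert_if)
    moreover have "finite (insert p U)" using fin U_def by simp
    ultimately have "card {w\<in>S. w \<noteq> u \<and> E u w} \<le> 2"
      using card_mono[OF _ N] by (meson le_trans)
    then show ?thesis using uS by blast
  qed
qed

lemma nc_colour:
  fixes S :: "nat set" and E :: "nat \<Rightarrow> nat \<Rightarrow> bool"
  assumes fin: "finite S"
    and Esym: "\<And>i j. E i j \<Longrightarrow> E j i"
    and nc: "\<And>a b c d. a \<in> S \<Longrightarrow> b \<in> S \<Longrightarrow> c \<in> S \<Longrightarrow> d \<in> S \<Longrightarrow>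
              a < b \<Longrightarrow> b < c \<Longrightarrow> c < d \<Longrightarrow> E a c \<Longrightarrow> E b d \<Longrightarrow> False"
  shows "\<exists>f. (\<forall>i\<in>S. f i < (3::nat)) \<and> (\<forall>i\<in>S. \<forall>j\<in>S. i \<noteq> j \<longrightarrow> E i j \<longrightarrow> f i \<noteq> f j)"
  using fin nc
proof (induction "card S" arbitrary: S rule: less_induct)
  case less
  show ?case
  proof (cases "S = {}")
    case True then show ?thesis by auto
  next
    case False
    obtain u where uS: "u \<in> S" and deg: "card {w\<in>S. w \<noteq> u \<and> E u w} \<le> 2"
      using nc_low_degree[OF less.prems(1) False, of E] Esym less.prems(2) by blast
    have "card (S - {u}) < card S" using card_Diff1_less[OF less.prems(1) uS] .
    then have "\<exists>f. (\<forall>i\<in>S - {u}. f i < (3::nat)) \<and>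
      (\<forall>i\<in>S - {u}. \<forall>j\<in>S - {u}. i \<noteq> j \<longrightarrow> E i j \<longrightarrow> f i \<noteq> f j)"
    proof (rule less.hyps)
      show "finite (S - {u})" using less.prems(1) by simp
    next
      fix a b c d assume "a \<in> S - {u}" "b \<in> S - {u}" "c \<in> S - {u}" "d \<in> S - {u}"
        "a < b" "b < c" "c < d" "E a c" "E b d"
      then show False using less.prems(2)[of a b c d] by blast
    qed
    then obtain f where f: "\<forall>i\<in>S - {u}. f i < (3::nat)"
      "\<forall>i\<in>S - {u}. \<forall>j\<in>S - {u}. i \<noteq> j \<longrightarrow> E i j \<longrightarrow> f i \<noteq> f j"
      by blast
    let ?N = "{w\<in>S. w \<noteq> u \<and> E u w}"
    have finN: "finite (f ` ?N)" using less.prems(1) by simp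
    have "card (f ` ?N) \<le> card ?N" by (rule card_image_le) (use less.prems(1) in simp)
    then have c2: "card (f ` ?N) \<le> 2" using deg by linarith
    have "\<not> {0,1,2::nat} \<subseteq> f ` ?N"
    proof
      assume "{0,1,2::nat} \<subseteq> f ` ?N"
      then have "card {0,1,2::nat} \<le> card (f ` ?N)" using card_mono finN by blast
      then show False using c2 by simp
    qed
    then obtain col where col: "col \<in> {0,1,2::nat}" "col \<notin> f ` ?N" by blast
    define g where "g = f(u := col)"
    have "\<forall>i\<in>S. g i < 3" using f(1) col(1) g_def by auto
    moreover have "\<forall>i\<in>S. \<forall>j\<in>S. i \<noteq> j \<longrightarrow> E i j \<longrightarrow> g i \<noteq> g j"
    proof (intro ballI impI)
      fix i j assume ij: "i \<in> S" "j \<in> S" "i \<noteq> j" "E i j"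
      show "g i \<noteq> g j"
      proof (cases "i = u")
        case True
        then have "j \<in> ?N" using ij by auto
        then show ?thesis using True col ij g_def by (metis fun_upd_same fun_upd_other image_eqI)
      next
        case False
        show ?thesis
        proof (cases "j = u")
          case True
          then have "i \<in> ?N" using ij Esym by auto
          then show ?thesis using True col ij g_def by (metis fun_upd_same fun_upd_other image_eqI)
        next
          case False2: False
          then show ?thesis using False f(2) ij g_def by auto
        qed
      qed
    qed
    ultimately show ?thesis by blast
  qed
qed

definition ppath :: "('a \<times> 'a) set \<Rightarrow> 'a list \<Rightarrow> bool" where
  "ppath A p \<longleftrightarrow> p \<noteq> [] \<and> distinct p \<and> successively (\<lambda>u v. (u, v) \<in> A) p"

definition ppart :: "'a set \<Rightarrow> ('a \<times> 'a) set \<Rightarrow> 'a list set \<Rightarrow> bool" where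
  "ppart V A P \<longleftrightarrow> finite P \<and> (\<forall>p\<in>P. ppath A p) \<and> (\<Union>p\<in>P. set p) = V \<and>
     (\<forall>p\<in>P. \<forall>q\<in>P. p \<noteq> q \<longrightarrow> set p \<inter> set q = {})"

lemma ppart_inj_last:
  assumes "ppart V A P" shows "inj_on last P"
proof (rule inj_onI)
  fix p q assume pq: "p \<in> P" "q \<in> P" "last p = last q"
  have "p \<noteq> []" "q \<noteq> []" using assms pq(1,2) unfolding ppart_def ppath_def by auto
  then have "last p \<in> set p" "last q \<in> set q" by auto
  then have "last p \<in> set p \<inter> set q" using pq(3) by simp
  then show "p = q" using assms pq unfolding ppart_def by blast
qed

lemma ppart_last_sub: "ppart V A P \<Longrightarrow> last ` P \<subseteq> V"
  unfolding ppart_def ppath_def by force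

lemma ppart_append:
  assumes pp: "ppart V A Q" and R: "R \<in> Q" and y: "y \<notin> V" and arc: "(last R, y) \<in> A"
  shows "ppart (insert y V) A (insert (R @ [y]) (Q - {R})) \<and>
         card (insert (R @ [y]) (Q - {R})) = card Q \<and>
         last ` (insert (R @ [y]) (Q - {R})) = insert y (last ` (Q - {R}))"
proof -
  have finQ: "finite Q" using pp ppart_def by blast
  have RV: "set R \<subseteq> V" using pp R unfolding ppart_def by blast
  have pR: "ppath A R" using pp R unfolding ppart_def by blast
  have notin: "R @ [y] \<notin> Q - {R}"
  proof
    assume "R @ [y] \<in> Q - {R}"
    then have "set (R @ [y]) \<subseteq> V" using pp unfolding ppart_def by blast
    then show False using y by simp
  qed
  have "ppath A (R @ [y])"
    using pR RV y arc unfolding ppath_def by (auto simp: successively_append_iff)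
  moreover have "(\<Union>p\<in>insert (R @ [y]) (Q - {R}). set p) = insert y V"
    using pp R unfolding ppart_def by auto
  moreover have "\<forall>p\<in>insert (R @ [y]) (Q - {R}). \<forall>q\<in>insert (R @ [y]) (Q - {R}).
      p \<noteq> q \<longrightarrow> set p \<inter> set q = {}"
  proof (intro ballI impI)
    fix p q assume p: "p \<in> insert (R @ [y]) (Q - {R})" and q: "q \<in> insert (R @ [y]) (Q - {R})"
      and pq: "p \<noteq> q"
    have yn: "y \<notin> set s" if "s \<in> Q" for s using pp that y unfolding ppart_def by blast
    have dR: "set R \<inter> set s = {}" if "s \<in> Q - {R}" for s using pp that R unfolding ppart_def by blast
    have dQ: "set s \<inter> set t = {}" if "s \<in> Q" "t \<in> Q" "s \<noteq> t" for s t
      using pp that unfolding ppart_def by blast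
    show "set p \<inter> set q = {}"
    proof (cases "p = R @ [y]")
      case True
      then have "q \<in> Q - {R}" using q pq by auto
      then show ?thesis using True dR[of q] yn[of q] by auto
    next
      case False
      then have pQ: "p \<in> Q - {R}" using p by auto
      show ?thesis
      proof (cases "q = R @ [y]")
        case True
        then show ?thesis using pQ dR[of p] yn[of p] by auto
      next
        case False
        then have "q \<in> Q - {R}" using q by auto
        then show ?thesis using pQ dQ[of p q] pq by auto
      qed
    qed
  qed
  ultimately have "ppart (insert y V) A (insert (R @ [y]) (Q - {R}))"
    using pp finQ unfolding ppart_def by auto
  moreover have "card (insert (R @ [y]) (Q - {R})) = card Q"
  proof -
    have "card (insert (R @ [y]) (Q - {R})) = Suc (card (Q - {R}))" using notin finQ by simp
    then show ?thesis using card_Suc_Diff1[OF finQ R] by simp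
  qed
  moreover have "last ` (insert (R @ [y]) (Q - {R})) = insert y (last ` (Q - {R}))" by simp
  ultimately show ?thesis by blast
qed

lemma ppart_remove:
  assumes pp: "ppart V A P" and Pj: "Pj \<in> P"
  shows "ppart (V - set Pj) A (P - {Pj})"
proof -
  have fin: "finite P" and pa: "\<forall>p\<in>P. ppath A p" and un: "(\<Union>p\<in>P. set p) = V"
    and dj: "\<forall>p\<in>P. \<forall>q\<in>P. p \<noteq> q \<longrightarrow> set p \<inter> set q = {}"
    using pp unfolding ppart_def by auto
  have "(\<Union>p\<in>P - {Pj}. set p) = V - set Pj"
  proof
    show "(\<Union>p\<in>P - {Pj}. set p) \<subseteq> V - set Pj"
    proof
      fix x assume "x \<in> (\<Union>p\<in>P - {Pj}. set p)"
      then obtain p where p: "p \<in> P" "p \<noteq> Pj" "x \<in> set p" by blast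
      have "set p \<inter> set Pj = {}" using dj p Pj by blast
      then show "x \<in> V - set Pj" using un p by blast
    qed
  next
    show "V - set Pj \<subseteq> (\<Union>p\<in>P - {Pj}. set p)" using un by blast
  qed
  then show ?thesis unfolding ppart_def using fin pa dj by auto
qed

lemma ppart_add:
  assumes pp: "ppart V A P" and pQ: "ppath A Q" and dis: "set Q \<inter> V = {}"
  shows "ppart (V \<union> set Q) A (insert Q P)"
proof -
  have fin: "finite P" and pa: "\<forall>p\<in>P. ppath A p" and un: "(\<Union>p\<in>P. set p) = V"
    and dj: "\<forall>p\<in>P. \<forall>q\<in>P. p \<noteq> q \<longrightarrow> set p \<inter> set q = {}"
    using pp unfolding ppart_def by auto
  have dQ: "set Q \<inter> set p = {}" if "p \<in> P" for p using un dis that by blast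
  have "\<forall>p\<in>insert Q P. \<forall>q\<in>insert Q P. p \<noteq> q \<longrightarrow> set p \<inter> set q = {}"
  proof (intro ballI impI)
    fix p q assume p: "p \<in> insert Q P" and q: "q \<in> insert Q P" and pq: "p \<noteq> q"
    show "set p \<inter> set q = {}"
    proof (cases "p = Q")
      case True
      then have "q \<in> P" using q pq by auto
      then show ?thesis using True dQ[of q] by auto
    next
      case False
      then have pP: "p \<in> P" using p by auto
      show ?thesis
      proof (cases "q = Q")
        case True
        then show ?thesis using pP dQ[of p] by auto
      next
        case False
        then have "q \<in> P" using q by auto
        then show ?thesis using pP dj pq by blast
      qed
    qed
  qed
  moreover have "(\<Union>p\<in>insert Q P. set p) = V \<union> set Q" using un by auto
  ultimately show ?thesis unfolding ppart_def using fin pa pQ by auto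
qed

lemma gm_step:
  assumes "finite V" and "ppart V A P" and noloop: "\<forall>u. (u, u) \<notin> A"
    and "\<forall>S. S \<subseteq> V \<and> (\<forall>u\<in>S. \<forall>v\<in>S. \<not> adj A u v) \<longrightarrow> card S < card P"
  shows "\<exists>Q. ppart V A Q \<and> Suc (card Q) = card P \<and> last ` Q \<subseteq> last ` P"
  using assms(1,2,4)
proof (induction "card V" arbitrary: V P rule: less_induct)
  case less
  note finV = less.prems(1) and pp = less.prems(2) and st = less.prems(3)
  have finP: "finite P" using pp ppart_def by blast
  define T where "T = last ` P"
  have "card T = card P" using ppart_inj_last[OF pp] T_def card_image by blast
  moreover have "T \<subseteq> V" using ppart_last_sub[OF pp] T_def by simp
  ultimately have "\<not> (\<forall>u\<in>T. \<forall>v\<in>T. \<not> adj A u v)"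
  proof -
    assume cT: "card T = card P" and TV: "T \<subseteq> V"
    show ?thesis
    proof
      assume h: "\<forall>u\<in>T. \<forall>v\<in>T. \<not> adj A u v"
      have "card T < card P" using st TV h by blast
      then show False using cT by simp
    qed
  qed
  then obtain a b where ab: "a \<in> T" "b \<in> T" "(a, b) \<in> A" unfolding adj_def by blast
  have anb: "a \<noteq> b" using ab noloop by auto
  obtain Pi where Pi: "Pi \<in> P" "last Pi = a" using ab T_def by blast
  obtain Pj where Pj: "Pj \<in> P" "last Pj = b" using ab T_def by blast
  have PiPj: "Pi \<noteq> Pj" using Pi Pj anb by blast
  have pPj: "ppath A Pj" using pp Pj unfolding ppart_def by blast
  have Pjsplit: "Pj = butlast Pj @ [b]" using pPj Pj(2) append_butlast_last_id[of Pj] unfolding ppath_def by simp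
  have bV: "b \<in> V" using ab \<open>T \<subseteq> V\<close> by blast
  have bnot: "b \<notin> set s" if "s \<in> P - {Pj}" for s
  proof -
    have "b \<in> set Pj" using pPj Pj unfolding ppath_def by auto
    then show ?thesis using pp that Pj unfolding ppart_def by blast
  qed
  have Vb: "insert b (V - {b}) = V" using bV by blast
  show ?case
  proof (cases "butlast Pj = []")
    case True
    have "Pj = [b]" using Pjsplit True by simp
    have pp0: "ppart (V - {b}) A (P - {Pj})"
      using ppart_remove[OF pp Pj(1)] \<open>Pj = [b]\<close> by simp
    have "Pi \<in> P - {Pj}" using Pi PiPj by blast
    from ppart_append[OF pp0 this, of b] Pi(2) ab(3)
    have R: "ppart V A (insert (Pi @ [b]) (P - {Pj} - {Pi}))"
      "card (insert (Pi @ [b]) (P - {Pj} - {Pi})) = card (P - {Pj})"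
      "last ` insert (Pi @ [b]) (P - {Pj} - {Pi}) = insert b (last ` (P - {Pj} - {Pi}))"
      using Vb by auto
    have "Suc (card (P - {Pj})) = card P" using Pj finP
      by (metis card_Suc_Diff1)
    moreover have "insert b (last ` (P - {Pj} - {Pi})) \<subseteq> last ` P" using Pj by auto
    ultimately show ?thesis using R by (intro exI[of _ "insert (Pi @ [b]) (P - {Pj} - {Pi})"]) simp
  next
    case False
    define Q where "Q = butlast Pj"
    define b' where "b' = last Q"
    have Qne: "Q \<noteq> []" using False Q_def by simp
    have PjQ: "Pj = Q @ [b]" using Pjsplit Q_def by simp
    have arcb: "(b', b) \<in> A" using pPj PjQ Qne unfolding ppath_def b'_def
      by (simp add: successively_append_iff)
    have pQ: "ppath A Q" using pPj PjQ Qne unfolding ppath_def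
      by (simp add: successively_append_iff)
    have bQ: "b \<notin> set Q" using pPj PjQ unfolding ppath_def by simp
    define P' where "P' = insert Q (P - {Pj})"
    have Qdisj: "set Q \<inter> set s = {}" if "s \<in> P - {Pj}" for s
    proof -
      have "set Pj \<inter> set s = {}" using pp that Pj(1) unfolding ppart_def by blast
      then show ?thesis using PjQ by auto
    qed
    have QnotP: "Q \<notin> P - {Pj}"
    proof
      assume "Q \<in> P - {Pj}"
      then have "set Q \<inter> set Q = {}" using Qdisj by blast
      then show False using Qne by simp
    qed
    have pp': "ppart (V - {b}) A P'"
    proof -
      have "ppart (V - set Pj \<union> set Q) A P'"
        unfolding P'_def by (rule ppart_add[OF ppart_remove[OF pp Pj(1)] pQ]) (use PjQ in auto)
      moreover have "set Pj \<subseteq> V" using pp Pj(1) unfolding ppart_def by blast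
      then have "V - set Pj \<union> set Q = V - {b}" using PjQ bQ by auto
      ultimately show ?thesis by simp
    qed
    have cardP'0: "card P' = Suc (card (P - {Pj}))"
      using QnotP finP unfolding P'_def by simp
    have cardP': "card P' = card P"
      using cardP'0 card_Suc_Diff1[OF finP Pj(1)] by simp
    have lt: "card (V - {b}) < card V" using finV bV by (rule card_Diff1_less)
    have finV': "finite (V - {b})" using finV by simp
    have st': "\<forall>S. S \<subseteq> V - {b} \<and> (\<forall>u\<in>S. \<forall>v\<in>S. \<not> adj A u v) \<longrightarrow> card S < card P'"
    proof (intro allI impI)
      fix S assume h: "S \<subseteq> V - {b} \<and> (\<forall>u\<in>S. \<forall>v\<in>S. \<not> adj A u v)"
      then have "S \<subseteq> V \<and> (\<forall>u\<in>S. \<forall>v\<in>S. \<not> adj A u v)" by blast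
      then have "card S < card P" by (rule st[rule_format])
      then show "card S < card P'" using cardP' by simp
    qed
    obtain Q' where Q': "ppart (V - {b}) A Q'" "Suc (card Q') = card P'"
      "last ` Q' \<subseteq> last ` P'"
      using less.hyps[OF lt finV' pp' st'] by blast
    have injQ': "inj_on last Q'" using ppart_inj_last[OF Q'(1)] .
    have lastP': "last ` P' = insert b' (last ` (P - {Pj}))" unfolding P'_def b'_def by simp
    have bnV: "b \<notin> V - {b}" by simp
    show ?thesis
    proof (cases "\<exists>R\<in>Q'. last R = b'")
      case True
      then obtain R where R: "R \<in> Q'" "last R = b'" by blast
      have arcR: "(last R, b) \<in> A" using R(2) arcb by simp
      note X0 = ppart_append[OF Q'(1) R(1) bnV arcR, unfolded Vb]
      have X: "ppart V A (insert (R @ [b]) (Q' - {R}))"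
        "card (insert (R @ [b]) (Q' - {R})) = card Q'"
        "last ` insert (R @ [b]) (Q' - {R}) = insert b (last ` (Q' - {R}))" using X0 by blast+
      have "last ` (Q' - {R}) \<subseteq> last ` P"
      proof
        fix z assume "z \<in> last ` (Q' - {R})"
        then obtain R' where R': "R' \<in> Q'" "R' \<noteq> R" "z = last R'" by blast
        have "z \<noteq> b'" using inj_onD[OF injQ', of R' R] R R' by auto
        moreover have "z \<in> insert b' (last ` (P - {Pj}))" using Q'(3) lastP' R' by blast
        ultimately show "z \<in> last ` P" by blast
      qed
      then have "last ` insert (R @ [b]) (Q' - {R}) \<subseteq> last ` P" using X(3) Pj by auto
      then show ?thesis using X(1,2) Q'(2) cardP' by (intro exI[of _ "insert (R @ [b]) (Q' - {R})"]) simp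
    next
      case False
      show ?thesis
      proof (cases "\<exists>R\<in>Q'. last R = a")
        case True
        then obtain R where R: "R \<in> Q'" "last R = a" by blast
        have arcR: "(last R, b) \<in> A" using R(2) ab(3) by simp
        note X0 = ppart_append[OF Q'(1) R(1) bnV arcR, unfolded Vb]
        have X: "ppart V A (insert (R @ [b]) (Q' - {R}))"
          "card (insert (R @ [b]) (Q' - {R})) = card Q'"
          "last ` insert (R @ [b]) (Q' - {R}) = insert b (last ` (Q' - {R}))" using X0 by blast+
        have "last ` (Q' - {R}) \<subseteq> last ` P"
        proof
          fix z assume "z \<in> last ` (Q' - {R})"
          then obtain R' where R': "R' \<in> Q'" "R' \<noteq> R" "z = last R'" by blast
          have "z \<noteq> b'" using False R' by blast
          moreover have "z \<in> insert b' (last ` (P - {Pj}))" using Q'(3) lastP' R' by blast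
          ultimately show "z \<in> last ` P" by blast
        qed
        then have "last ` insert (R @ [b]) (Q' - {R}) \<subseteq> last ` P" using X(3) Pj by auto
        then show ?thesis using X(1,2) Q'(2) cardP' by (intro exI[of _ "insert (R @ [b]) (Q' - {R})"]) simp
      next
        case False2: False
        have sub: "last ` Q' \<subseteq> last ` (P - {Pj}) - {a}"
        proof
          fix z assume z: "z \<in> last ` Q'"
          then obtain R where R: "R \<in> Q'" "z = last R" by blast
          have "z \<noteq> b'" "z \<noteq> a" using False False2 R by auto
          moreover have "z \<in> insert b' (last ` (P - {Pj}))" using Q'(3) lastP' z by blast
          ultimately show "z \<in> last ` (P - {Pj}) - {a}" by blast
        qed
        have e1: "card (last ` Q') = card Q'" using injQ' by (rule card_image)
        have "a \<in> last ` (P - {Pj})" using Pi PiPj by (intro image_eqI[of _ _ Pi]) auto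
        then have c1: "card (last ` (P - {Pj}) - {a}) < card (last ` (P - {Pj}))"
          using finP by (intro card_Diff1_less) auto
        have c2: "card (last ` (P - {Pj})) \<le> card (P - {Pj})" using finP by (intro card_image_le) auto
        have c3: "Suc (card (P - {Pj})) = card P" using card_Suc_Diff1[OF finP Pj(1)] .
        have c4: "card (last ` Q') \<le> card (last ` (P - {Pj}) - {a})"
          using sub finP by (intro card_mono) auto
        have d: "card (P - {Pj}) = card Q'" using c3 Q'(2) cardP' by simp
        have "card Q' \<le> card (last ` (P - {Pj}) - {a})" using e1 c4 by simp
        then have "card Q' < card (last ` (P - {Pj}))" using c1 by (rule le_less_trans)
        then have "card Q' < card (P - {Pj})" using c2 by (rule less_le_trans)
        then have False using d by simp
        then show ?thesis by blast
      qed
    qed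
  qed
qed

lemma gallai_milgram:
  assumes finV: "finite V" and noloop: "\<forall>u. (u, u) \<notin> A"
  shows "\<exists>P. ppart V A P \<and> (\<exists>S. stable_set V A S \<and> card P \<le> card S)"
proof -
  define P0 where "P0 = (\<lambda>v. [v]) ` V"
  have "ppart V A P0" unfolding P0_def ppart_def ppath_def using finV by auto
  define m where "m = (LEAST n. \<exists>P. ppart V A P \<and> card P = n)"
  have "\<exists>P. ppart V A P \<and> card P = m"
    unfolding m_def using LeastI_ex[of "\<lambda>n. \<exists>P. ppart V A P \<and> card P = n"] \<open>ppart V A P0\<close> by blast
  then obtain P where P: "ppart V A P" "card P = m" by blast
  have mmin: "m \<le> card Q" if "ppart V A Q" for Q
    unfolding m_def by (rule Least_le) (use that in blast)
  show ?thesis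
  proof (rule ccontr)
    assume "\<not> ?thesis"
    note neg = this
    have "\<forall>S. S \<subseteq> V \<and> (\<forall>u\<in>S. \<forall>v\<in>S. \<not> adj A u v) \<longrightarrow> card S < card P"
    proof (intro allI impI)
      fix S assume h: "S \<subseteq> V \<and> (\<forall>u\<in>S. \<forall>v\<in>S. \<not> adj A u v)"
      then have sS: "stable_set V A S" unfolding stable_set_def by blast
      show "card S < card P"
      proof (rule ccontr)
        assume "\<not> card S < card P"
        then have "card P \<le> card S" by simp
        then show False using neg P(1) sS by blast
      qed
    qed
    from gm_step[OF finV P(1) noloop this] obtain Q where "ppart V A Q" "Suc (card Q) = card P" by blast
    then have "m \<le> card Q" "Suc (card Q) = card P" using mmin by auto
    then show False using P(2) by simp
  qed
qed

lemma idx_dipath: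
  assumes pP: "ppath A P" and PV: "set P \<subseteq> V"
    and L: "L \<noteq> []" "distinct L" "\<forall>l\<in>set L. l < length P"
    "successively (\<lambda>i j. (P ! i, P ! j) \<in> A) L"
  shows "dipath V A (map ((!) P) L) (P ! hd L) (P ! last L)"
proof -
  have dP: "distinct P" using pP ppath_def by blast
  have inj: "inj_on ((!) P) (set L)" using inj_on_nth[OF dP] L(3) by blast
  have "distinct (map ((!) P) L)" using L(2) inj by (simp add: distinct_map)
  moreover have "set (map ((!) P) L) \<subseteq> V" using L(3) PV by auto
  moreover have "successively (\<lambda>u v. (u, v) \<in> A) (map ((!) P) L)"
    using L(4) by (simp add: successively_map)
  moreover have "\<forall>i. Suc i < length L \<longrightarrow> (P ! (L ! i), P ! (L ! Suc i)) \<in> A"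
    using L(4) by (simp add: successively_conv_nth)
  ultimately show ?thesis unfolding dipath_def using L(1)
    by (simp add: hd_map last_map)
qed

lemma upt_succ:
  assumes pP: "ppath A P" and "i \<le> j" "j < length P"
  shows "successively (\<lambda>i j. (P ! i, P ! j) \<in> A) [i..<Suc j]"
  unfolding successively_conv_nth
proof (intro allI impI)
  fix t assume t: "Suc t < length [i..<Suc j]"
  have "successively (\<lambda>u v. (u, v) \<in> A) P" using pP ppath_def by blast
  moreover have "Suc (i + t) < length P" using t assms by simp
  ultimately have "(P ! (i + t), P ! Suc (i + t)) \<in> A" by (rule successively_nth)
  moreover have "[i..<Suc j] ! t = i + t" "[i..<Suc j] ! Suc t = Suc (i + t)"
    using t by (simp_all del: upt_Suc)
  ultimately show "(P ! ([i..<Suc j] ! t), P ! ([i..<Suc j] ! Suc t)) \<in> A" by simp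
qed

lemma subdiv_lists:
  assumes pP: "ppath A P" and PV: "set P \<subseteq> V"
    and L1: "L1 \<noteq> []" "distinct L1" "\<forall>l\<in>set L1. l < length P"
    "successively (\<lambda>i j. (P ! i, P ! j) \<in> A) L1"
    and L2: "L2 \<noteq> []" "distinct L2" "\<forall>l\<in>set L2. l < length P"
    "successively (\<lambda>i j. (P ! i, P ! j) \<in> A) L2"
    and hd: "hd L1 = x" "hd L2 = x" and last: "last L1 = y" "last L2 = y"
    and xy: "x \<noteq> y" and int: "set L1 \<inter> set L2 = {x, y}"
    and len: "k1 + 1 \<le> length L1" "k2 + 1 \<le> length L2" "2 < length L1 \<or> 2 < length L2"
  shows "contains_subdiv_C V A k1 k2"
proof -
  have dP: "distinct P" using pP ppath_def by blast
  let ?p1 = "map ((!) P) L1" and ?p2 = "map ((!) P) L2"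
  have d1: "dipath V A ?p1 (P ! x) (P ! y)" using idx_dipath[OF pP PV L1] hd last by simp
  have d2: "dipath V A ?p2 (P ! x) (P ! y)" using idx_dipath[OF pP PV L2] hd last by simp
  have xyn: "x < length P" "y < length P" using L1(1,3) hd last by auto
  have "P ! x \<noteq> P ! y" using xy xyn dP by (simp add: nth_eq_iff_index_eq)
  moreover have "set ?p1 \<inter> set ?p2 = {P ! x, P ! y}"
  proof -
    have "set ?p1 \<inter> set ?p2 = (!) P ` (set L1 \<inter> set L2)"
      using inj_on_image_Int[OF inj_on_nth[OF dP, of "{..<length P}"], of "set L1" "set L2"] L1(3) L2(3)
      by auto
    then show ?thesis using int by simp
  qed
  ultimately show ?thesis unfolding contains_subdiv_C_def using d1 d2 len
    by (intro exI[of _ "P ! x"] exI[of _ "P ! y"] exI[of _ ?p1] exI[of _ ?p2]) auto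
qed

lemma crossing_subdiv:
  assumes pP: "ppath A P" and PV: "set P \<subseteq> V"
    and k: "k1 \<le> k" "k2 \<le> k" "1 \<le> k"
    and abcd: "a < b" "b < c" "c < d" "d < length P" "k \<le> b - a" "k \<le> d - c"
    and ac: "adj A (P ! a) (P ! c)" and bd: "adj A (P ! b) (P ! d)"
  shows "contains_subdiv_C V A k1 k2"
proof -
  let ?R = "\<lambda>i j. (P ! i, P ! j) \<in> A"
  have sab: "successively ?R [a..<Suc b]" using upt_succ[OF pP, of a b] abcd by simp
  have scd: "successively ?R [c..<Suc d]" using upt_succ[OF pP, of c d] abcd by simp
  have hab: "hd [a..<Suc b] = a" "last [a..<Suc b] = b" using abcd by simp_all
  have hcd: "hd [c..<Suc d] = c" "last [c..<Suc d] = d" using abcd by simp_all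
  consider "?R a c" "?R b d" | "?R c a" "?R d b" | "?R a c" "?R d b" | "?R c a" "?R b d"
    using ac bd unfolding adj_def by blast
  then show ?thesis
  proof cases
    case 1
    show ?thesis
    proof (rule subdiv_lists[OF pP PV, of "a # [c..<Suc d]" "[a..<Suc b] @ [d]" a d])
      show "successively ?R (a # [c..<Suc d])" using scd 1 hcd abcd by (simp add: successively_Cons)
      show "successively ?R ([a..<Suc b] @ [d])" using sab 1 hab by (simp add: successively_append_iff)
      show "set (a # [c..<Suc d]) \<inter> set ([a..<Suc b] @ [d]) = {a, d}" using abcd by auto
    qed (use abcd k in auto)
  next
    case 2
    show ?thesis
    proof (rule subdiv_lists[OF pP PV, of "c # [a..<Suc b]" "[c..<Suc d] @ [b]" c b])
      show "successively ?R (c # [a..<Suc b])" using sab 2 hab abcd by (simp add: successively_Cons)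
      show "successively ?R ([c..<Suc d] @ [b])" using scd 2 hcd by (simp add: successively_append_iff)
      show "set (c # [a..<Suc b]) \<inter> set ([c..<Suc d] @ [b]) = {c, b}" using abcd by auto
    qed (use abcd k in auto)
  next
    case 3
    show ?thesis
    proof (rule subdiv_lists[OF pP PV, of "[a..<Suc b]" "a # [c..<Suc d] @ [b]" a b])
      show "successively ?R [a..<Suc b]" using sab .
      show "successively ?R (a # [c..<Suc d] @ [b])" using scd 3 hcd abcd
        by (simp add: successively_Cons successively_append_iff)
      show "set [a..<Suc b] \<inter> set (a # [c..<Suc d] @ [b]) = {a, b}" using abcd by auto
    qed (use abcd k in auto)
  next
    case 4
    show ?thesis
    proof (rule subdiv_lists[OF pP PV, of "[c..<Suc d]" "c # [a..<Suc b] @ [d]" c d])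
      show "successively ?R [c..<Suc d]" using scd .
      show "successively ?R (c # [a..<Suc b] @ [d])" using sab 4 hab abcd
        by (simp add: successively_Cons successively_append_iff)
      show "set [c..<Suc d] \<inter> set (c # [a..<Suc b] @ [d]) = {c, d}" using abcd by auto
    qed (use abcd k in auto)
  qed
qed

lemma block_eq:
  fixes x y i j K :: nat
  assumes "x < K" "y < K" "K * i + x = K * j + y"
  shows "i = j"
proof -
  have K: "K \<noteq> 0" using assms(1) by simp
  have "(x + K * i) div K = i" using assms(1) K by simp
  moreover have "(y + K * j) div K = j" using assms(2) K by simp
  ultimately show ?thesis using assms(3) by (simp add: add.commute)
qed

lemma block_lt:
  fixes x i m K :: nat
  assumes "x < K" "i < m"
  shows "K * i + x < K * m"
proof -
  have "K * i + x < K * Suc i" using assms(1) by simp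
  also have "\<dots> \<le> K * m" using assms(2) by (intro mult_le_mono2) simp
  finally show ?thesis .
qed

lemma path_colour:
  assumes og: "oriented_graph V A" and pP: "ppath A P" and PV: "set P \<subseteq> V"
    and k1: "k1 \<ge> 1" and k2: "k2 \<ge> 1" and nosub: "\<not> contains_subdiv_C V A k1 k2"
  shows "\<exists>c. (\<forall>v\<in>set P. c v < 3 * max k1 k2) \<and> (\<forall>u\<in>set P. \<forall>v\<in>set P. adj A u v \<longrightarrow> c u \<noteq> c v)"
proof -
  define k where "k = max k1 k2"
  have kpos: "1 \<le> k" and kk: "k1 \<le> k" "k2 \<le> k" using k1 k2 k_def by auto
  define n where "n = length P"
  define E where "E i j \<longleftrightarrow> adj A (P ! i) (P ! j)" for i j
  have Esym: "E i j \<Longrightarrow> E j i" for i j unfolding E_def adj_def by blast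
  define S where "S r = {i. i < n \<and> i mod k = r}" for r
  have gap: "k \<le> b - a" if "a < b" "a mod k = b mod k" for a b
  proof -
    have "k dvd b - a" using that mod_eq_dvd_iff_nat[of a b k] by simp
    moreover have "0 < b - a" using that by simp
    ultimately show ?thesis by (rule dvd_imp_le)
  qed
  have col: "\<exists>f. (\<forall>i\<in>S r. f i < (3::nat)) \<and> (\<forall>i\<in>S r. \<forall>j\<in>S r. i \<noteq> j \<longrightarrow> E i j \<longrightarrow> f i \<noteq> f j)" for r
  proof (rule nc_colour)
    show "finite (S r)" unfolding S_def by simp
    show "E j i" if "E i j" for i j using Esym that .
    fix a b c d assume abcd: "a \<in> S r" "b \<in> S r" "c \<in> S r" "d \<in> S r" "a < b" "b < c" "c < d" "E a c" "E b d"
    have "contains_subdiv_C V A k1 k2"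
    proof (rule crossing_subdiv[OF pP PV kk kpos])
      show "a < b" "b < c" "c < d" using abcd by auto
      show "d < length P" using abcd S_def n_def by auto
      show "k \<le> b - a" using gap[of a b] abcd S_def by auto
      show "k \<le> d - c" using gap[of c d] abcd S_def by auto
      show "adj A (P ! a) (P ! c)" "adj A (P ! b) (P ! d)" using abcd E_def by auto
    qed
    then show False using nosub by blast
  qed
  then have "\<forall>r. \<exists>f. (\<forall>i\<in>S r. f i < (3::nat)) \<and> (\<forall>i\<in>S r. \<forall>j\<in>S r. i \<noteq> j \<longrightarrow> E i j \<longrightarrow> f i \<noteq> f j)"
    by blast
  from choice[OF this] obtain F where F: "\<And>r. (\<forall>i\<in>S r. F r i < (3::nat)) \<and>
      (\<forall>i\<in>S r. \<forall>j\<in>S r. i \<noteq> j \<longrightarrow> E i j \<longrightarrow> F r i \<noteq> F r j)" by blast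
  have dP: "distinct P" using pP ppath_def by blast
  define ix where "ix v = (THE i. i < n \<and> P ! i = v)" for v
  have ix: "ix v < n \<and> P ! ix v = v" if "v \<in> set P" for v
  proof -
    have "\<exists>!i. i < n \<and> P ! i = v" using distinct_Ex1[OF dP that] n_def by simp
    then show ?thesis unfolding ix_def by (rule theI')
  qed
  define c where "c v = 3 * (ix v mod k) + F (ix v mod k) (ix v)" for v
  have inS: "ix v \<in> S (ix v mod k)" if "v \<in> set P" for v using ix[OF that] S_def by simp
  have "\<forall>v\<in>set P. c v < 3 * k"
  proof
    fix v assume v: "v \<in> set P"
    have "F (ix v mod k) (ix v) < 3" using F inS[OF v] by blast
    moreover have "ix v mod k < k" using kpos by simp
    ultimately show "c v < 3 * k" unfolding c_def by (rule block_lt[of _ 3])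
  qed
  moreover have "\<forall>u\<in>set P. \<forall>v\<in>set P. adj A u v \<longrightarrow> c u \<noteq> c v"
  proof (intro ballI impI)
    fix u v assume u: "u \<in> set P" and v: "v \<in> set P" and uv: "adj A u v"
    have "u \<noteq> v" using uv og unfolding adj_def oriented_graph_def by blast
    then have ne: "ix u \<noteq> ix v" using ix[OF u] ix[OF v] by metis
    have Euv: "E (ix u) (ix v)" using ix[OF u] ix[OF v] uv E_def by simp
    show "c u \<noteq> c v"
    proof
      assume eq: "c u = c v"
      have Fu: "F (ix u mod k) (ix u) < 3" using F inS[OF u] by blast
      have Fv: "F (ix v mod k) (ix v) < 3" using F inS[OF v] by blast
      have same: "ix u mod k = ix v mod k"
        using block_eq[OF Fu Fv] eq unfolding c_def by blast
      then have "F (ix u mod k) (ix u) \<noteq> F (ix u mod k) (ix v)"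
        using F[of "ix u mod k"] inS[OF u] inS[OF v] ne Euv by auto
      then show False using eq same unfolding c_def by simp
    qed
  qed
  ultimately show ?thesis unfolding k_def by blast
qed

theorem corollary1:
  fixes V :: "'a set" and A :: "('a \<times> 'a) set" and k1 k2 :: nat
  assumes "oriented_graph V A"
    and "k1 \<ge> 1" and "k2 \<ge> 1"
    and "\<not> contains_subdiv_C V A k1 k2"
  shows "chromatic_number V A \<le> 3 * stability_number V A * max k1 k2"
proof -
  note og = assms(1)
  define K where "K = 3 * max k1 k2"
  have finV: "finite V" and noloop: "\<forall>u. (u, u) \<notin> A" using og unfolding oriented_graph_def by auto
  obtain PP S where PP: "ppart V A PP" and S: "stable_set V A S" "card PP \<le> card S"
    using gallai_milgram[OF finV noloop] by blast
  have "finite {S. stable_set V A S}"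
    by (rule finite_subset[of _ "Pow V"]) (use finV in \<open>auto simp: stable_set_def\<close>)
  then have "card S \<le> stability_number V A"
    unfolding stability_number_def using S(1) by (intro Max_ge) auto
  then have cPP: "card PP \<le> stability_number V A" using S(2) by simp
  have finPP: "finite PP" and pa: "\<forall>p\<in>PP. ppath A p" and un: "(\<Union>p\<in>PP. set p) = V"
    and dj: "\<forall>p\<in>PP. \<forall>q\<in>PP. p \<noteq> q \<longrightarrow> set p \<inter> set q = {}"
    using PP unfolding ppart_def by auto
  obtain ps where ps: "set ps = PP" "distinct ps" using finite_distinct_list[OF finPP] by blast
  have lenps: "length ps = card PP" using ps distinct_card by metis
  have "\<forall>p\<in>PP. \<exists>c. (\<forall>v\<in>set p. c v < K) \<and> (\<forall>u\<in>set p. \<forall>v\<in>set p. adj A u v \<longrightarrow> c u \<noteq> c v)"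
  proof
    fix p assume p: "p \<in> PP"
    have "set p \<subseteq> V" using un p by blast
    then show "\<exists>c. (\<forall>v\<in>set p. c v < K) \<and> (\<forall>u\<in>set p. \<forall>v\<in>set p. adj A u v \<longrightarrow> c u \<noteq> c v)"
      unfolding K_def using path_colour[OF og _ _ assms(2,3,4)] pa p by blast
  qed
  from bchoice[OF this] obtain C where C: "\<forall>p\<in>PP. (\<forall>v\<in>set p. C p v < K) \<and>
      (\<forall>u\<in>set p. \<forall>v\<in>set p. adj A u v \<longrightarrow> C p u \<noteq> C p v)" by blast
  define m where "m = length ps"
  define ix where "ix v = (THE j. j < m \<and> v \<in> set (ps ! j))" for v
  have ix: "ix v < m \<and> v \<in> set (ps ! ix v)" if vV: "v \<in> V" for v
  proof -
    obtain p where p: "p \<in> PP" "v \<in> set p" using un vV by blast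
    obtain j where j: "j < m" "ps ! j = p" using p(1) ps(1) m_def by (metis in_set_conv_nth)
    have "j' = j" if "j' < m" "v \<in> set (ps ! j')" for j'
    proof (rule ccontr)
      assume "j' \<noteq> j"
      then have "ps ! j' \<noteq> ps ! j" using ps(2) j(1) that(1) m_def by (simp add: nth_eq_iff_index_eq)
      moreover have "ps ! j' \<in> PP" "ps ! j \<in> PP" using ps(1) j(1) that(1) m_def by auto
      ultimately have "set (ps ! j') \<inter> set (ps ! j) = {}" using dj by blast
      then show False using that(2) j(2) p(2) by blast
    qed
    then have "\<exists>!j. j < m \<and> v \<in> set (ps ! j)" using j p(2) by blast
    then show ?thesis unfolding ix_def by (rule theI')
  qed
  define col where "col v = K * ix v + C (ps ! ix v) v" for v
  have inPP: "ps ! ix v \<in> PP" if "v \<in> V" for v using ix[OF that] ps(1) m_def by auto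
  have Cl: "C (ps ! ix v) v < K" if "v \<in> V" for v using C inPP[OF that] ix[OF that] by blast
  have "proper_colouring V A (K * m) col"
    unfolding proper_colouring_def
  proof (intro conjI ballI impI)
    fix v assume v: "v \<in> V"
    show "col v < K * m" unfolding col_def using block_lt[OF Cl[OF v]] ix[OF v] by blast
  next
    fix u v assume u: "u \<in> V" and v: "v \<in> V" and uv: "adj A u v"
    show "col u \<noteq> col v"
    proof
      assume eq: "col u = col v"
      then have same: "ix u = ix v" using block_eq[OF Cl[OF u] Cl[OF v]] unfolding col_def by blast
      have "u \<in> set (ps ! ix u)" "v \<in> set (ps ! ix u)" using ix[OF u] ix[OF v] same by auto
      then have "C (ps ! ix u) u \<noteq> C (ps ! ix u) v" using C inPP[OF u] uv by blast
      then show False using eq same unfolding col_def by simp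
    qed
  qed
  then have "chromatic_number V A \<le> K * m"
    unfolding chromatic_number_def by (rule Least_le[where P = "\<lambda>k. \<exists>c. proper_colouring V A k c", OF exI])
  also have "K * m \<le> 3 * stability_number V A * max k1 k2"
  proof -
    have "K * m \<le> K * stability_number V A" using cPP lenps m_def by (intro mult_le_mono2) simp
    also have "\<dots> = 3 * stability_number V A * max k1 k2" unfolding K_def by simp
    finally show ?thesis .
  qed
  finally show ?thesis .
qed

end
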